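(* Fix $a>0$. As $b\to+\infty$ through real values, uniformly for $\zeta$ in compact subsets of the complex plane, $$ {}_1F_1\big(a;b;b(1+b^{-1/2}\zeta)\big)=\frac{\Gamma(b)}{\Gamma(b-a)}\,b^{-a/2}\,e^{\zeta^2/4}\Big[D_{-a}(-\zeta)+\frac{A_1(a,\zeta)}{b^{1/2}}+\frac{A_2(a,\zeta)}{b}+O(b^{-3/2})\Big], $$ where $$A_1(a,\zeta)=a(a+1)D_{-a-1}(-\zeta)-\frac{a(a+1)(a+2)}{3}D_{-a-3}(-\zeta),$$ $$A_2(a,\zeta)=\frac{a(a+1)^2(a+2)}{2}D_{-a-2}(-\zeta)-\frac{\Gamma(a+4)}{\Gamma(a)}\Big(\frac14+\frac{a+1}{3}\Big)D_{-a-4}(-\zeta)+\frac{\Gamma(a+6)}{18\,\Gamma(a)}D_{-a-6}(-\zeta).$$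
   Context: ${}_1F_1(a;b;z)=\sum_{k=0}^\infty \frac{(a)_k}{(b)_k}\frac{z^k}{k!}$ is Kummer's confluent hypergeometric function, with $(x)_k=\Gamma(x+k)/\Gamma(x)$. $D_\nu$ denotes the parabolic cylinder function, given for $\mathrm{Re}\,\nu<0$ by $D_\nu(z)=\frac{e^{-z^2/4}}{\Gamma(-\nu)}\int_0^\infty e^{-zs-s^2/2}s^{-\nu-1}\,ds$. *)

theory Defs
  imports "HOL-Analysis.Analysis"
begin

definition hyp1F1 :: "real \<Rightarrow> real \<Rightarrow> complex \<Rightarrow> complex" where
  "hyp1F1 a b z = (\<Sum>k. complex_of_real (pochhammer a k / pochhammer b k) * z ^ k / of_nat (fact k))"

text \<open>Parabolic cylinder function D_nu(z) for real nu < 0 via its integral representation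
  D_nu(z) = exp(-z^2/4)/Gamma(-nu) * integral from 0 to infinity of exp(-z s - s^2/2) s^(-nu-1) ds.\<close>
definition pcf_D :: "real \<Rightarrow> complex \<Rightarrow> complex" where
  "pcf_D \<nu> z = exp (- (z^2) / 4) / complex_of_real (Gamma (- \<nu>)) *
     integral {0<..} (\<lambda>s::real. exp (- z * complex_of_real s - complex_of_real (s^2 / 2))
                                  * complex_of_real (s powr (- \<nu> - 1)))"

definition A1 :: "real \<Rightarrow> complex \<Rightarrow> complex" where
  "A1 a \<zeta> = complex_of_real (a * (a + 1)) * pcf_D (- a - 1) (- \<zeta>)
            - complex_of_real (a * (a + 1) * (a + 2) / 3) * pcf_D (- a - 3) (- \<zeta>)"

definition A2 :: "real \<Rightarrow> complex \<Rightarrow> complex" where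
  "A2 a \<zeta> = complex_of_real (a * (a + 1)^2 * (a + 2) / 2) * pcf_D (- a - 2) (- \<zeta>)
            - complex_of_real (Gamma (a + 4) / Gamma a * (1/4 + (a + 1) / 3)) * pcf_D (- a - 4) (- \<zeta>)
            + complex_of_real (Gamma (a + 6) / (18 * Gamma a)) * pcf_D (- a - 6) (- \<zeta>)"

end

theory Submission
  imports Defs
begin


lemma beta_scaled:
  fixes r \<alpha> \<beta> :: real
  assumes r: "r > 0" and al: "\<alpha> > 0" and be: "\<beta> > 0"
  shows "((\<lambda>s. if s < r then (s/r) powr (\<alpha>-1) * (1-s/r) powr (\<beta>-1) else 0)
            has_integral r * Beta \<alpha> \<beta>) {0<..}"
proof -
  let ?f = "\<lambda>t::real. t powr (\<alpha> - 1) * (1 - t) powr (\<beta> - 1)"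
  have "(?f has_integral (\<bar>1/r\<bar> *\<^sub>R (r * Beta \<alpha> \<beta>))) {0..1}"
    using has_integral_Beta_real[OF al be] r by simp
  then have "((\<lambda>x. ?f ((1/r) * x)) has_integral (r * Beta \<alpha> \<beta>)) ((\<lambda>x. x / (1/r)) ` {0..1})"
    using has_integral_stretch_real_iff[of "1/r" ?f "r * Beta \<alpha> \<beta>" 0 1] r by simp
  moreover have "(\<lambda>x. x / (1/r)) ` {0..1} = {0..r}"
  proof -
    have "(\<lambda>x. x / (1/r)) ` {0..1} = (\<lambda>x. r * x) ` {0..1}" by (simp add: mult.commute)
    also have "\<dots> = {0..r}" using r by (simp add: image_mult_atLeastAtMost_if)
    finally show ?thesis .
  qed
  ultimately have "((\<lambda>x. ?f (x / r)) has_integral (r * Beta \<alpha> \<beta>)) {0<..<r}"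
    by (simp add: has_integral_Icc_iff_Ioo)
  then have "((\<lambda>x. if x \<in> {0<..<r} then ?f (x / r) else 0) has_integral (r * Beta \<alpha> \<beta>)) {0<..}"
    by (subst has_integral_restrict) auto
  then show ?thesis
    by (rule has_integral_eq[rotated]) auto
qed



lemma expsum: fixes x :: real assumes "x \<ge> 0" shows "(\<Sum>k<n. x^k / fact k) \<le> exp x"
proof -
  have s: "(\<lambda>k. x^k / fact k) sums exp x"
    using exp_converges[of x] by (simp add: divide_inverse mult.commute)
  have "(\<Sum>k<n. x^k / fact k) \<le> (\<Sum>k. x^k / fact k)"
    by (rule sum_le_suminf) (use s assms in \<open>auto simp: sums_iff\<close>)
  then show ?thesis using s by (simp add: sums_iff)
qed

lemma euler_rep:
  fixes a b r :: real and z :: complex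
  assumes a: "a > 0" and ab: "b > a" and r: "r > 0"
  defines "W \<equiv> \<lambda>s::real. if s < r then (s/r) powr (a-1) * (1-s/r) powr (b-a-1) else 0"
  shows "(\<lambda>s. exp (z * of_real (s/r)) * of_real (W s)) integrable_on {0<..}"
    and "hyp1F1 a b z = of_real (Gamma b / (Gamma a * Gamma (b-a) * r)) *
           integral {0<..} (\<lambda>s. exp (z * of_real (s/r)) * of_real (W s))"
proof -
  define f where "f = (\<lambda>n s. \<Sum>k<n. (z^k / fact k) * of_real ((s/r)^k * W s) :: complex)"
  define c where "c = (\<lambda>k. (z^k / fact k) * of_real (r * Beta (a + real k) (b - a)) :: complex)"
  have W0: "W s \<ge> 0" for s unfolding W_def by auto
  have trm: "((\<lambda>s. (s/r)^k * W s) has_integral r * Beta (a + real k) (b - a)) {0<..}" for k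
  proof -
    have "((\<lambda>s. if s < r then (s/r) powr (a + real k - 1) * (1-s/r) powr (b-a-1) else 0)
            has_integral r * Beta (a + real k) (b - a)) {0<..}"
      using beta_scaled[of r "a + real k" "b - a"] r a ab by simp
    then show ?thesis
    proof (rule has_integral_eq[rotated])
      fix s :: real assume "s \<in> {0<..}"
      then have "s / r > 0" using r by simp
      then show "(if s < r then (s/r) powr (a + real k - 1) * (1-s/r) powr (b-a-1) else 0) = (s/r)^k * W s"
        unfolding W_def by (auto simp: powr_add powr_realpow[symmetric] powr_diff)
    qed
  qed
  have fint: "(f n has_integral (\<Sum>k<n. c k)) {0<..}" for n
    unfolding f_def c_def
    apply (rule has_integral_sum, simp)
    apply (rule has_integral_mult_right)
    apply (rule has_integral_of_real)
    apply (rule trm)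
    done
  have hint: "((\<lambda>s. exp (norm z) * W s) has_integral exp (norm z) * (r * Beta a (b - a))) {0<..}"
    using has_integral_mult_right[OF trm[of 0], of "exp (norm z)"] by simp
  have le: "norm (f n s) \<le> exp (norm z) * W s" if "s \<in> {0<..}" for n s
  proof (cases "s < r")
    case True
    have q: "0 \<le> s / r" "s / r \<le> 1" using that True r by auto
    have "norm (f n s) \<le> (\<Sum>k<n. norm ((z^k / fact k) * of_real ((s/r)^k * W s)))"
      unfolding f_def by (rule norm_sum)
    also have "\<dots> \<le> (\<Sum>k<n. norm z ^ k / fact k * W s)"
    proof (rule sum_mono)
      fix k
      have "norm ((z^k / fact k) * of_real ((s/r)^k * W s)) = norm z ^ k / fact k * ((s/r)^k * W s)"
        using q W0[of s] that r by (simp add: norm_mult norm_divide norm_power)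
      also have "\<dots> \<le> norm z ^ k / fact k * (1 * W s)"
        by (intro mult_left_mono mult_right_mono W0) (use q in \<open>auto simp: power_le_one\<close>)
      finally show "norm ((z^k / fact k) * of_real ((s/r)^k * W s)) \<le> norm z ^ k / fact k * W s" by simp
    qed
    also have "\<dots> = (\<Sum>k<n. norm z ^ k / fact k) * W s" by (simp add: sum_distrib_right)
    also have "\<dots> \<le> exp (norm z) * W s"
      by (intro mult_right_mono expsum W0) auto
    finally show ?thesis .
  next
    case False
    then show ?thesis unfolding f_def W_def by simp
  qed
  have conv: "(\<lambda>n. f n s) \<longlonglongrightarrow> exp (z * of_real (s/r)) * of_real (W s)" for s
  proof -
    have "(\<lambda>n. \<Sum>k<n. (z * of_real (s/r))^k /\<^sub>R fact k) \<longlonglongrightarrow> exp (z * of_real (s/r))"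
      using exp_converges[of "z * of_real (s/r)"] by (simp add: sums_def)
    then have "(\<lambda>n. (\<Sum>k<n. (z * of_real (s/r))^k /\<^sub>R fact k) * of_real (W s))
                 \<longlonglongrightarrow> exp (z * of_real (s/r)) * of_real (W s)"
      by (intro tendsto_mult_right)
    moreover have "(\<Sum>k<n. (z * of_real (s/r))^k /\<^sub>R fact k) * of_real (W s) = f n s" for n
      unfolding f_def sum_distrib_right
      by (intro sum.cong refl) (simp add: scaleR_conv_of_real power_mult_distrib divide_inverse mult_ac)
    ultimately show ?thesis by simp
  qed
  have dc: "(\<lambda>s. exp (z * of_real (s/r)) * of_real (W s)) integrable_on {0<..}"
           "(\<lambda>n. integral {0<..} (f n)) \<longlonglongrightarrow> integral {0<..} (\<lambda>s. exp (z * of_real (s/r)) * of_real (W s))"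
  proof -
    have i1: "\<And>k. f k integrable_on {0<..}" using fint by (auto simp: has_integral_integrable)
    have i2: "(\<lambda>s. exp (norm z) * W s) integrable_on {0<..}" using hint by (rule has_integral_integrable)
    show "(\<lambda>s. exp (z * of_real (s/r)) * of_real (W s)) integrable_on {0<..}"
     "(\<lambda>n. integral {0<..} (f n)) \<longlonglongrightarrow> integral {0<..} (\<lambda>s. exp (z * of_real (s/r)) * of_real (W s))"
      using dominated_convergence[of f "{0<..}" "\<lambda>s. exp (norm z) * W s", OF i1 i2 le conv] by auto
  qed
  then show "(\<lambda>s. exp (z * of_real (s/r)) * of_real (W s)) integrable_on {0<..}" by simp
  have "c sums integral {0<..} (\<lambda>s. exp (z * of_real (s/r)) * of_real (W s))"
  proof -
    have "integral {0<..} (f n) = sum c {..<n}" for n using fint[of n] by (rule integral_unique)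
    then show ?thesis unfolding sums_def using dc(2) by simp
  qed
  then have S: "(\<lambda>k. of_real (Gamma b / (Gamma a * Gamma (b-a) * r)) * c k) sums
     (of_real (Gamma b / (Gamma a * Gamma (b-a) * r)) * integral {0<..} (\<lambda>s. exp (z * of_real (s/r)) * of_real (W s)))"
    by (rule sums_mult)
  have "of_real (Gamma b / (Gamma a * Gamma (b-a) * r)) * c k =
         complex_of_real (pochhammer a k / pochhammer b k) * z ^ k / of_nat (fact k)" for k
  proof -
    have na: "a \<notin> \<int>\<^sub>\<le>\<^sub>0" "b \<notin> \<int>\<^sub>\<le>\<^sub>0" using a ab by (auto elim!: nonpos_Ints_cases)
    have g: "Gamma a > 0" "Gamma b > 0" "Gamma (b - a) > 0" "Gamma (b + real k) > 0" "Gamma (a + real k) > 0"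
      using a ab by (auto intro!: Gamma_real_pos)
    have "Gamma b / (Gamma a * Gamma (b-a) * r) * (r * Beta (a + real k) (b - a))
          = pochhammer a k / pochhammer b k"
      using g r by (simp add: pochhammer_Gamma[OF na(1)] pochhammer_Gamma[OF na(2)] Beta_def field_simps)
    note e = this
    have "of_real (Gamma b / (Gamma a * Gamma (b-a) * r)) * c k =
      of_real (Gamma b / (Gamma a * Gamma (b-a) * r) * (r * Beta (a + real k) (b - a))) * z ^ k / of_nat (fact k)"
      unfolding c_def of_real_mult by (simp add: algebra_simps)
    then show ?thesis by (simp only: e)
  qed
  with S show "hyp1F1 a b z = of_real (Gamma b / (Gamma a * Gamma (b-a) * r)) *
           integral {0<..} (\<lambda>s. exp (z * of_real (s/r)) * of_real (W s))"
    unfolding hyp1F1_def by (simp add: sums_iff)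
qed



lemma ln_L2:
  fixes x :: real assumes "0 \<le> x" "x \<le> 1/2"
  shows "ln (1-x) + x + x^2/2 \<le> 0" "\<bar>ln (1-x) + x + x^2/2\<bar> \<le> x^3"
proof -
  define f where "f = (\<lambda>x::real. ln (1-x) + x + x^2/2)"
  have d: "DERIV f t :> (- (t^2) / (1 - t))" if "t < 1" for t
  proof -
    have "DERIV f t :> (-1 / (1 - t) + 1 + t)"
      unfolding f_def using that by (auto intro!: derivative_eq_intros simp: field_simps)
    moreover have "-1 / (1 - t) + 1 + t = - (t^2) / (1 - t)" using that by (simp add: field_simps power2_eq_square)
    ultimately show ?thesis by simp
  qed
  have "f x \<le> f 0"
  proof (rule DERIV_nonpos_imp_nonincreasing[OF assms(1)])
    fix t assume t: "0 \<le> t" "t \<le> x"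
    then have "t < 1" using assms by linarith
    then show "\<exists>y. DERIV f t :> y \<and> y \<le> 0"
      using d[of t] t by (intro exI[of _ "- (t^2) / (1 - t)"]) (auto intro!: divide_nonpos_pos)
  qed
  then show 1: "ln (1-x) + x + x^2/2 \<le> 0" by (simp add: f_def)
  have "(\<lambda>t. f t + t^3) 0 \<le> (\<lambda>t. f t + t^3) x"
  proof (rule DERIV_nonneg_imp_nondecreasing[OF assms(1)])
    fix t :: real assume t: "0 \<le> t" "t \<le> x"
    then have t1: "t \<le> 1/2" using assms by simp
    have "DERIV (\<lambda>t. f t + t^3) t :> (- (t^2) / (1 - t) + 3 * t^2)"
      using d[of t] t1 by (auto intro!: derivative_eq_intros)
    moreover have "- (t^2) / (1 - t) + 3 * t^2 \<ge> 0"
    proof -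
      have "t^2 / (1 - t) \<le> t^2 / (1/2)"
        using t t1 by (intro divide_left_mono) auto
      then have A: "t^2 / (1 - t) \<le> 2 * t^2" by simp
      have B: "0 \<le> t^2" using t by simp
      have "0 \<le> 3 * t^2 - t^2 / (1 - t)" using A B by linarith
      also have "3 * t^2 - t^2 / (1 - t) = - (t^2) / (1 - t) + 3 * t^2" by simp
      finally show ?thesis .
    qed
    ultimately show "\<exists>y. DERIV (\<lambda>t. f t + t^3) t :> y \<and> y \<ge> 0" by blast
  qed
  then have "f x \<ge> -(x^3)" by (simp add: f_def)
  with 1 show "\<bar>ln (1-x) + x + x^2/2\<bar> \<le> x^3" by (simp add: f_def)
qed

lemma ln_L4:
  fixes x :: real assumes "0 \<le> x" "x \<le> 1/2"
  shows "\<bar>ln (1-x) + x + x^2/2 + x^3/3 + x^4/4\<bar> \<le> x^5"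
proof -
  define f where "f = (\<lambda>x::real. ln (1-x) + x + x^2/2 + x^3/3 + x^4/4)"
  have d: "DERIV f t :> (- (t^4) / (1 - t))" if "t < 1" for t
  proof -
    have "DERIV f t :> (-1 / (1 - t) + 1 + t + t^2 + t^3)"
      unfolding f_def using that by (auto intro!: derivative_eq_intros simp: field_simps)
    moreover have "-1 / (1 - t) + 1 + t + t^2 + t^3 = - (t^4) / (1 - t)" using that
      by (simp add: field_simps power2_eq_square power3_eq_cube power4_eq_xxxx)
    ultimately show ?thesis by simp
  qed
  have "f x \<le> f 0"
  proof (rule DERIV_nonpos_imp_nonincreasing[OF assms(1)])
    fix t assume t: "0 \<le> t" "t \<le> x"
    then have "t < 1" using assms by linarith
    then show "\<exists>y. DERIV f t :> y \<and> y \<le> 0"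
      using d[of t] t by (intro exI[of _ "- (t^4) / (1 - t)"]) (auto intro!: divide_nonpos_pos)
  qed
  then have 1: "f x \<le> 0" by (simp add: f_def)
  have "(\<lambda>t. f t + t^5) 0 \<le> (\<lambda>t. f t + t^5) x"
  proof (rule DERIV_nonneg_imp_nondecreasing[OF assms(1)])
    fix t :: real assume t: "0 \<le> t" "t \<le> x"
    then have t1: "t \<le> 1/2" using assms by simp
    have "DERIV (\<lambda>t. f t + t^5) t :> (- (t^4) / (1 - t) + 5 * t^4)"
      using d[of t] t1 by (auto intro!: derivative_eq_intros)
    moreover have "- (t^4) / (1 - t) + 5 * t^4 \<ge> 0"
    proof -
      have "t^4 / (1 - t) \<le> t^4 / (1/2)"
        using t t1 by (intro divide_left_mono) auto
      then have A: "t^4 / (1 - t) \<le> 2 * t^4" by simp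
      have B: "0 \<le> t^4" using t by simp
      have "0 \<le> 5 * t^4 - t^4 / (1 - t)" using A B by linarith
      also have "5 * t^4 - t^4 / (1 - t) = - (t^4) / (1 - t) + 5 * t^4" by simp
      finally show ?thesis .
    qed
    ultimately show "\<exists>y. DERIV (\<lambda>t. f t + t^5) t :> y \<and> y \<ge> 0" by blast
  qed
  then have "f x \<ge> -(x^5)" by (simp add: f_def)
  with 1 show ?thesis by (simp add: f_def)
qed

lemma ln_le0:
  fixes x :: real assumes "0 \<le> x" "x < 1"
  shows "ln (1-x) + x + x^2/2 \<le> 0"
proof -
  define f where "f = (\<lambda>x::real. ln (1-x) + x + x^2/2)"
  have d: "DERIV f t :> (- (t^2) / (1 - t))" if "t < 1" for t
  proof -
    have "DERIV f t :> (-1 / (1 - t) + 1 + t)"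
      unfolding f_def using that by (auto intro!: derivative_eq_intros simp: field_simps)
    moreover have "-1 / (1 - t) + 1 + t = - (t^2) / (1 - t)" using that by (simp add: field_simps power2_eq_square)
    ultimately show ?thesis by simp
  qed
  have "f x \<le> f 0"
  proof (rule DERIV_nonpos_imp_nonincreasing[OF assms(1)])
    fix t assume t: "0 \<le> t" "t \<le> x"
    then have "t < 1" using assms by linarith
    then show "\<exists>y. DERIV f t :> y \<and> y \<le> 0"
      using d[of t] t by (intro exI[of _ "- (t^2) / (1 - t)"]) (auto intro!: divide_nonpos_pos)
  qed
  then show ?thesis by (simp add: f_def)
qed

lemma exp_taylor2:
  fixes w c :: real assumes "w \<le> c" "c \<ge> 0"
  shows "\<bar>exp w - 1 - w - w^2/2\<bar> \<le> (exp c + 3) * \<bar>w\<bar>^3"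
proof (cases "\<bar>w\<bar> \<le> 1")
  case True
  obtain t where t: "\<bar>t\<bar> \<le> \<bar>w\<bar>" "exp w = (\<Sum>m<3. w^m / fact m) + exp t / fact 3 * w^3"
    using Maclaurin_exp_le[of w 3] by blast
  have e: "exp w - 1 - w - w^2/2 = exp t / 6 * w^3"
    using t(2) by (simp add: eval_nat_numeral fact_numeral power2_eq_square)
  have "exp t \<le> exp 1" using t(1) True by simp
  also have "exp (1::real) \<le> exp c + 3" using exp_le by (smt (verit) exp_gt_zero)
  finally have "exp t / 6 \<le> exp c + 3" using exp_gt_zero[of t] by linarith
  then have "exp t / 6 * \<bar>w\<bar>^3 \<le> (exp c + 3) * \<bar>w\<bar>^3"
    by (intro mult_right_mono) auto
  moreover have "\<bar>exp t / 6 * w^3\<bar> = exp t / 6 * \<bar>w\<bar>^3" by (simp add: abs_mult power_abs)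
  ultimately show ?thesis unfolding e by simp
next
  case False
  then have w1: "1 \<le> \<bar>w\<bar>" by simp
  have "\<bar>exp w - 1 - w - w^2/2\<bar> \<le> exp w + 1 + \<bar>w\<bar> + \<bar>w\<bar>^2"
    using exp_gt_zero[of w] zero_le_power2[of w] unfolding power2_abs by arith
  also have "\<dots> \<le> exp c + \<bar>w\<bar>^3 + \<bar>w\<bar>^3 + \<bar>w\<bar>^3"
  proof -
    have "exp w \<le> exp c" using assms by simp
    moreover have "1 \<le> \<bar>w\<bar>^3" using w1 by (simp add: one_le_power)
    moreover have "\<bar>w\<bar> \<le> \<bar>w\<bar>^3" using power_increasing[of 1 3 "\<bar>w\<bar>"] w1 by simp
    moreover have "\<bar>w\<bar>^2 \<le> \<bar>w\<bar>^3" using w1 by (intro power_increasing) auto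
    ultimately show ?thesis by linarith
  qed
  also have "\<dots> \<le> (exp c + 3) * \<bar>w\<bar>^3"
  proof -
    have "exp c \<le> exp c * \<bar>w\<bar>^3" using w1 by (simp add: one_le_power)
    then show ?thesis by (simp add: algebra_simps)
  qed
  finally show ?thesis .
qed



definition K0 :: "real \<Rightarrow> real" where "K0 A = (exp A + 3) * 216 * A^3 + 16 * A^2 + 2 * A"

lemma core_bound:
  fixes A r u w Q V \<rho> :: real
  assumes A: "A \<ge> 1" and r: "r \<ge> 1" and u: "u \<ge> 1"
    and Q: "\<bar>Q\<bar> \<le> 2*A*u/r" and V: "\<bar>V\<bar> \<le> 2*A*u/r^2" and \<rho>: "\<bar>\<rho>\<bar> \<le> 2*A*u/r^3"
    and w: "w = Q + V + \<rho>" and wle: "w \<le> A"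
  shows "\<bar>exp w - 1 - Q - V - Q^2/2\<bar> \<le> K0 A * u^3 / r^3"
proof -
  have r0: "r > 0" using r by simp
  have r2: "r^2 \<ge> r" using r by (simp add: power2_eq_square)
  have r3: "r^3 \<ge> r^2" using r by (simp add: power2_eq_square power3_eq_cube)
  have Au: "0 \<le> 2*A*u" using A u by simp
  have d1: "2*A*u/r^2 \<le> 2*A*u/r" by (rule divide_left_mono[OF r2 Au]) (use r0 in simp)
  have d2: "2*A*u/r^3 \<le> 2*A*u/r^2" by (rule divide_left_mono[OF r3 Au]) (use r0 in simp)
  have V': "\<bar>V\<bar> \<le> 2*A*u/r" using V d1 by linarith
  have \<rho>2: "\<bar>\<rho>\<bar> \<le> 2*A*u/r^2" using \<rho> d2 by linarith
  have \<rho>': "\<bar>\<rho>\<bar> \<le> 2*A*u/r" using \<rho>2 d1 by linarith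
  have wb: "\<bar>w\<bar> \<le> 6*A*u/r"
  proof -
    have "\<bar>w\<bar> \<le> \<bar>Q\<bar> + \<bar>V\<bar> + \<bar>\<rho>\<bar>" using w by linarith
    also have "\<dots> \<le> 2*A*u/r + 2*A*u/r + 2*A*u/r" using Q V' \<rho>' by linarith
    finally show ?thesis by simp
  qed
  define T where "T = exp w - 1 - w - w^2/2"
  have T: "\<bar>T\<bar> \<le> (exp A + 3) * \<bar>w\<bar>^3" unfolding T_def
    by (rule exp_taylor2[OF wle]) (use A in simp)
  have "\<bar>w\<bar>^3 \<le> (6*A*u/r)^3" by (rule power_mono[OF wb]) simp
  also have "\<dots> = 216 * A^3 * u^3 / r^3" by (simp add: power_divide power_mult_distrib)
  finally have "(exp A + 3) * \<bar>w\<bar>^3 \<le> (exp A + 3) * (216 * A^3 * u^3 / r^3)"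
    by (intro mult_left_mono) (auto intro: add_nonneg_nonneg less_imp_le)
  moreover have "(exp A + 3) * (216 * A^3 * u^3 / r^3) = (exp A + 3) * 216 * A^3 * u^3 / r^3" by simp
  ultimately have T2: "\<bar>T\<bar> \<le> (exp A + 3) * 216 * A^3 * u^3 / r^3"
    using T by linarith
  have e: "exp w - 1 - Q - V - Q^2/2 = T + \<rho> + ((V + \<rho>) * (2*Q + V + \<rho>))/2"
    unfolding T_def w by (simp add: power2_eq_square algebra_simps)
  have p1: "\<bar>V + \<rho>\<bar> \<le> 4*A*u/r^2" using V \<rho>2 by linarith
  have p2: "\<bar>2*Q + V + \<rho>\<bar> \<le> 8*A*u/r" using Q V' \<rho>' by linarith
  have "\<bar>(V + \<rho>) * (2*Q + V + \<rho>)\<bar> \<le> (4*A*u/r^2) * (8*A*u/r)"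
    unfolding abs_mult by (rule mult_mono[OF p1 p2]) (use A u r0 in auto)
  also have "\<dots> = 32 * A^2 * u^2 / r^3" by (simp add: power2_eq_square power3_eq_cube)
  finally have P: "\<bar>((V + \<rho>) * (2*Q + V + \<rho>))/2\<bar> \<le> 16 * A^2 * u^2 / r^3" by simp
  have u2: "u^2 \<le> u^3" using u by (intro power_increasing) auto
  have u1: "u \<le> u^3" using u power_increasing[of 1 3 u] by simp
  have P': "16 * A^2 * u^2 / r^3 \<le> 16 * A^2 * u^3 / r^3"
    using u2 r0 by (intro divide_right_mono mult_left_mono) auto
  have R': "2*A*u/r^3 \<le> 2*A*u^3/r^3"
    using u1 r0 A by (intro divide_right_mono mult_left_mono) auto
  have "\<bar>exp w - 1 - Q - V - Q^2/2\<bar> \<le> (exp A + 3) * 216 * A^3 * u^3 / r^3 + 2*A*u^3/r^3 + 16 * A^2 * u^3 / r^3"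
    unfolding e using T2 \<rho> P P' R' by linarith
  also have "\<dots> = K0 A * u^3 / r^3" unfolding K0_def using r0 by (simp add: field_simps)
  finally show ?thesis .
qed



definition K1 :: "real \<Rightarrow> real" where "K1 A = K0 A + 8 * (exp (3*A/2) + 1 + 4*A + 2*A^2)"

lemma sig_pow1: "0 \<le> s \<Longrightarrow> j \<le> k \<Longrightarrow> (1+s::real)^j \<le> (1+s)^k"
  by (rule power_increasing) auto

lemma sig_pow2: "0 \<le> s \<Longrightarrow> j \<le> k \<Longrightarrow> (s::real)^j \<le> (1+s)^k"
proof -
  assume s: "0 \<le> s" and jk: "j \<le> k"
  have "s^j \<le> (1+s)^j" by (rule power_mono) (use s in auto)
  also have "\<dots> \<le> (1+s)^k" by (rule sig_pow1[OF s jk])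
  finally show ?thesis .
qed

lemma h_bound:
  fixes A r s :: real
  assumes A: "A \<ge> 0" and r: "r > 0" and rb: "r^2 \<ge> A" and s: "0 < s" "s < r"
  shows "exp (r * s) * (1 - s/r) powr (r^2 - A) \<le> exp (3*A/2) * exp (-(s^2)/2)"
proof -
  define x where "x = s / r"
  have x: "0 < x" "x < 1" using s r by (auto simp: x_def)
  have sx: "s = r * x" using r by (simp add: x_def)
  have "exp (r * s) * (1 - s/r) powr (r^2 - A) = exp (r^2 * x + (r^2 - A) * ln (1 - x))"
    using x r by (simp add: powr_def exp_add sx power2_eq_square x_def[symmetric] mult_ac)
  also have "r^2 * x + (r^2 - A) * ln (1 - x) = (r^2 - A) * (x + ln (1 - x)) + A * x"
    by (simp add: algebra_simps)
  also have "\<dots> \<le> (r^2 - A) * (- (x^2) / 2) + A * x"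
  proof -
    have "x + ln (1 - x) \<le> - (x^2)/2" using ln_le0[of x] x by simp
    then show ?thesis using rb by (intro add_right_mono mult_left_mono) auto
  qed
  also have "\<dots> = -(s^2)/2 + (A * x^2 / 2 + A * x)" by (simp add: sx power2_eq_square field_simps)
  also have "\<dots> \<le> -(s^2)/2 + 3*A/2"
  proof -
    have "x^2 \<le> 1" using x by (simp add: power_le_one)
    then have "A * x^2 \<le> A" using A by (simp add: mult_left_le)
    moreover have "A * x \<le> A" using A x by (simp add: mult_left_le)
    ultimately show ?thesis by linarith
  qed
  finally have "exp (r * s) * (1 - s/r) powr (r^2 - A) \<le> exp (-(s^2)/2 + 3*A/2)" by simp
  then have "exp (r * s) * (1 - s/r) powr (r^2 - A) \<le> exp (-(s^2)/2 + 3*A/2)" by simp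
  also have "exp (-(s^2)/2 + 3*A/2) = exp (3*A/2) * exp (-(s^2)/2)"
    by (simp add: mult.commute flip: exp_add)
  finally show ?thesis .
qed

lemma real_D_bound:
  fixes a r s :: real
  assumes a: "a > 0" and r: "r \<ge> 1" and rb: "r^2 \<ge> a + 1" and s: "s > 0"
  shows "\<bar>(if s < r then exp (r * s) * (1 - s/r) powr (r^2 - a - 1) else 0)
            - exp (-(s^2)/2) * (1 + ((a+1) * s - s^3/3)/r
                 + ((a+1) * s^2/2 - s^4/4 + ((a+1) * s - s^3/3)^2/2)/r^2)\<bar>
         \<le> K1 (a+1) * (1+s)^18 * exp (-(s^2)/2) / r^3"
proof -
  define A where "A = a + 1"
  have A1: "A \<ge> 1" using a by (simp add: A_def)
  have r0: "r > 0" using r by simp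
  define \<sigma> where "\<sigma> = 1 + s"
  have \<sigma>1: "\<sigma> \<ge> 1" using s by (simp add: \<sigma>_def)
  define q1 where "q1 = A * s - s^3/3"
  define w2 where "w2 = A * s^2/2 - s^4/4"
  define P where "P = 1 + q1/r + (w2 + q1^2/2)/r^2"
  have Peq: "1 + ((a+1) * s - s^3/3)/r + ((a+1) * s^2/2 - s^4/4 + ((a+1) * s - s^3/3)^2/2)/r^2 = P"
    by (simp add: P_def q1_def w2_def A_def)
  have pw: "s^j \<le> \<sigma>^k" "\<sigma>^j \<le> \<sigma>^k" if "j \<le> k" for j k
    using sig_pow1[of s j k] sig_pow2[of s j k] s that by (auto simp: \<sigma>_def)
  have q1b: "\<bar>q1\<bar> \<le> 2*A*\<sigma>^3"
  proof -
    have "\<bar>q1\<bar> \<le> A * s + s^3" 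
    proof -
      have "0 < s^3" "0 \<le> A * s" using s A1 by simp_all
      then show ?thesis unfolding q1_def abs_le_iff by linarith
    qed 
    also have "\<dots> \<le> A*\<sigma>^3 + A*\<sigma>^3"
    proof -
      have "A * s \<le> A*\<sigma>^3" using pw(1)[of 1 3] A1 by (intro mult_left_mono) auto
      moreover have "s^3 \<le> A*\<sigma>^3"
      proof -
        have "1 * \<sigma>^3 \<le> A*\<sigma>^3" using A1 \<sigma>1 by (intro mult_right_mono) auto
        then show ?thesis using pw(1)[of 3 3] by simp
      qed
      ultimately show ?thesis by linarith
    qed
    finally show ?thesis by simp
  qed
  have w2b: "\<bar>w2\<bar> \<le> 2*A*\<sigma>^4"
  proof -
    have "\<bar>w2\<bar> \<le> A * s^2 + s^4" 
    proof -
      have "0 < s^4" "0 \<le> A * s^2" using s A1 by simp_all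
      then show ?thesis unfolding w2_def abs_le_iff by linarith
    qed
    also have "\<dots> \<le> A*\<sigma>^4 + A*\<sigma>^4"
    proof -
      have "A * s^2 \<le> A*\<sigma>^4" using pw(1)[of 2 4] A1 by (intro mult_left_mono) auto
      moreover have "s^4 \<le> A*\<sigma>^4"
      proof -
        have "1 * \<sigma>^4 \<le> A*\<sigma>^4" using A1 \<sigma>1 by (intro mult_right_mono) auto
        then show ?thesis using pw(1)[of 4 4] by simp
      qed
      ultimately show ?thesis by linarith
    qed
    finally show ?thesis by simp
  qed
  have divle: "c / d \<le> c" if "0 \<le> c" "1 \<le> d" for c d :: real
    using divide_left_mono[of 1 d c] that by simp
  have r2: "r^2 \<ge> 1" using r by (simp add: one_le_power)
  have r3: "r^3 \<ge> 1" using r by (simp add: one_le_power)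
  have q1sq: "q1^2 \<le> 4*A^2*\<sigma>^6"
  proof -
    have "q1^2 = \<bar>q1\<bar>^2" by simp
    also have "\<dots> \<le> (2*A*\<sigma>^3)^2" by (rule power_mono[OF q1b]) simp
    also have "\<dots> = 4*A^2*\<sigma>^6" by (simp add: power_mult_distrib power_mult[symmetric])
    finally show ?thesis .
  qed
  have Pb: "\<bar>P\<bar> \<le> (1 + 4*A + 2*A^2) * \<sigma>^6"
  proof -
    have e1: "P = 1 + q1/r + w2/r^2 + (q1^2/2)/r^2" unfolding P_def by (simp add: add_divide_distrib)
    have e2: "\<bar>q1/r\<bar> = \<bar>q1\<bar>/r" "\<bar>w2/r^2\<bar> = \<bar>w2\<bar>/r^2" using r0 by (simp_all add: abs_divide)
    have e3: "(q1^2/2)/r^2 \<ge> 0" by simp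
    have "\<bar>P\<bar> \<le> 1 + \<bar>q1\<bar>/r + \<bar>w2\<bar>/r^2 + (q1^2/2)/r^2"
      unfolding e1 using e2 e3 by linarith
    also have "\<dots> \<le> 1 + \<bar>q1\<bar> + \<bar>w2\<bar> + q1^2/2"
    proof -
      have "\<bar>q1\<bar>/r \<le> \<bar>q1\<bar>" by (rule divle) (use r in auto)
      moreover have "\<bar>w2\<bar>/r^2 \<le> \<bar>w2\<bar>" by (rule divle) (use r2 in auto)
      moreover have "(q1^2/2)/r^2 \<le> q1^2/2" by (rule divle) (use r2 in auto)
      ultimately show ?thesis by linarith
    qed
    also have "\<dots> \<le> \<sigma>^6 + 2*A*\<sigma>^6 + 2*A*\<sigma>^6 + 2*A^2*\<sigma>^6"
    proof -
      have "1 \<le> \<sigma>^6" using \<sigma>1 by (simp add: one_le_power)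
      moreover have "\<bar>q1\<bar> \<le> 2*A*\<sigma>^6"
      proof -
        have "2*A*\<sigma>^3 \<le> 2*A*\<sigma>^6" using pw(2)[of 3 6] A1 by (intro mult_left_mono) auto
        then show ?thesis using q1b by linarith
      qed
      moreover have "\<bar>w2\<bar> \<le> 2*A*\<sigma>^6"
      proof -
        have "2*A*\<sigma>^4 \<le> 2*A*\<sigma>^6" using pw(2)[of 4 6] A1 by (intro mult_left_mono) auto
        then show ?thesis using w2b by linarith
      qed
      ultimately show ?thesis using q1sq by linarith
    qed
    also have "\<dots> = (1 + 4*A + 2*A^2) * \<sigma>^6" by (simp add: algebra_simps)
    finally show ?thesis .
  qed
  define Y where "Y = exp (-(s^2)/2)"
  have Y0: "Y > 0" by (simp add: Y_def)
  define H where "H = (if s < r then exp (r * s) * (1 - s/r) powr (r^2 - a - 1) else 0)"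
  have K0pos: "K0 A \<ge> 0" unfolding K0_def using A1 by (intro add_nonneg_nonneg mult_nonneg_nonneg) auto
  have K0K1: "K0 A \<le> K1 A" unfolding K1_def using A1 by (intro add_increasing2) auto
  have goal: "\<bar>H - Y * P\<bar> \<le> K1 A * \<sigma>^18 * Y / r^3"
  proof (cases "s \<le> r/2")
    case True
    have sr: "s < r" using True s r0 by linarith
    define x where "x = s / r"
    have x: "0 < x" "x \<le> 1/2" using s r0 True by (auto simp: x_def field_simps)
    have sx: "s = r * x" using r0 by (simp add: x_def)
    define L2 where "L2 = ln (1-x) + x + x^2/2"
    define L4 where "L4 = ln (1-x) + x + x^2/2 + x^3/3 + x^4/4"
    define w where "w = r * s + (r^2 - A) * ln (1 - x) + s^2/2"
    define \<rho> where "\<rho> = r^2 * L4 - A * L2"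
    have "H = exp (r * s + (r^2 - A) * ln (1 - x))"
      using sr x by (simp add: H_def powr_def exp_add A_def x_def[symmetric] diff_diff_eq mult.commute)
    also have "\<dots> = Y * exp w" by (simp add: Y_def w_def flip: exp_add)
    finally have Hw: "H = Y * exp w" .
    have weq: "w = q1/r + w2/r^2 + \<rho>"
      using r0 unfolding w_def \<rho>_def L4_def L2_def q1_def w2_def sx
      by (simp add: field_simps power2_eq_square power3_eq_cube power4_eq_xxxx)
    have \<rho>b: "\<bar>\<rho>\<bar> \<le> 2*A*\<sigma>^5/r^3"
    proof -
      have l4: "\<bar>L4\<bar> \<le> x^5" unfolding L4_def using ln_L4[of x] x by simp
      have l2: "\<bar>L2\<bar> \<le> x^3" unfolding L2_def using ln_L2(2)[of x] x by simp
      have "\<bar>\<rho>\<bar> \<le> r^2 * \<bar>L4\<bar> + A * \<bar>L2\<bar>"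
      proof -
        have "\<bar>r^2 * L4\<bar> = r^2 * \<bar>L4\<bar>" "\<bar>A * L2\<bar> = A * \<bar>L2\<bar>" using A1 by (simp_all add: abs_mult)
        then show ?thesis unfolding \<rho>_def by linarith
      qed
      also have "\<dots> \<le> r^2 * x^5 + A * x^3"
        using l4 l2 A1 by (intro add_mono mult_left_mono) auto
      also have "\<dots> = (s^5 + A * s^3) / r^3"
        using r0 by (simp add: x_def power_divide field_simps eval_nat_numeral)
      also have "\<dots> \<le> (A * \<sigma>^5 + A * \<sigma>^5) / r^3"
      proof -
        have "s^5 \<le> \<sigma>^5" using pw(1)[of 5 5] by simp
        moreover have "1 * \<sigma>^5 \<le> A * \<sigma>^5" using A1 \<sigma>1 by (intro mult_right_mono) auto
        moreover have "A * s^3 \<le> A * \<sigma>^5" using pw(1)[of 3 5] A1 by (intro mult_left_mono) auto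
        ultimately show ?thesis using r0 by (intro divide_right_mono) auto
      qed
      finally show ?thesis by simp
    qed
    have wle: "w \<le> A"
    proof -
      have we: "w = r^2 * L2 - A * ln (1 - x)"
        unfolding w_def L2_def sx by (simp add: algebra_simps power2_eq_square)
      have "L2 \<le> 0" unfolding L2_def using ln_L2(1)[of x] x by simp
      then have "r^2 * L2 \<le> 0" by (simp add: mult_nonneg_nonpos)
      moreover have "- ln (1 - x) \<le> 1"
      proof -
        have "ln (1/2) \<le> ln (1 - x)" using x by (subst ln_le_cancel_iff) auto
        moreover have "ln (1/2::real) = - ln 2" by (simp add: ln_div)
        ultimately show ?thesis using ln_2_less_1 by linarith
      qed
      then have "A * (- ln (1 - x)) \<le> A * 1" using A1 by (intro mult_left_mono) auto
      ultimately show ?thesis unfolding we by simp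
    qed
    have Qb: "\<bar>q1/r\<bar> \<le> 2*A*\<sigma>^5/r"
    proof -
      have "\<bar>q1/r\<bar> = \<bar>q1\<bar>/r" using r0 by (simp add: abs_divide)
      also have "\<dots> \<le> 2*A*\<sigma>^5/r"
      proof -
        have "2*A*\<sigma>^3 \<le> 2*A*\<sigma>^5" using pw(2)[of 3 5] A1 by (intro mult_left_mono) auto
        then show ?thesis using q1b r0 by (intro divide_right_mono) auto
      qed
      finally show ?thesis .
    qed
    have Vb: "\<bar>w2/r^2\<bar> \<le> 2*A*\<sigma>^5/r^2"
    proof -
      have "\<bar>w2/r^2\<bar> = \<bar>w2\<bar>/r^2" using r0 by (simp add: abs_divide)
      also have "\<dots> \<le> 2*A*\<sigma>^5/r^2"
      proof -
        have "2*A*\<sigma>^4 \<le> 2*A*\<sigma>^5" using pw(2)[of 4 5] A1 by (intro mult_left_mono) auto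
        then show ?thesis using w2b r0 by (intro divide_right_mono) auto
      qed
      finally show ?thesis .
    qed
    have u1: "\<sigma>^5 \<ge> 1" using \<sigma>1 by (simp add: one_le_power)
    have cb: "\<bar>exp w - 1 - q1/r - w2/r^2 - (q1/r)^2/2\<bar> \<le> K0 A * (\<sigma>^5)^3 / r^3"
      by (rule core_bound[OF A1 r u1 Qb Vb \<rho>b weq wle])
    have Pe: "P = 1 + q1/r + w2/r^2 + (q1/r)^2/2"
      unfolding P_def by (simp add: power_divide add_divide_distrib)
    have "\<bar>H - Y * P\<bar> = Y * \<bar>exp w - 1 - q1/r - w2/r^2 - (q1/r)^2/2\<bar>"
    proof -
      have "Y * exp w - Y * (1 + q1/r + w2/r^2 + (q1/r)^2/2) = Y * (exp w - 1 - q1/r - w2/r^2 - (q1/r)^2/2)"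
        by (simp add: algebra_simps)
      then show ?thesis unfolding Hw Pe using Y0 by (simp add: abs_mult)
    qed
    also have "\<dots> \<le> Y * (K0 A * (\<sigma>^5)^3 / r^3)" using cb Y0 by (intro mult_left_mono) auto
    also have "\<dots> \<le> Y * (K1 A * \<sigma>^18 / r^3)"
    proof -
      have "(\<sigma>^5)^3 \<le> \<sigma>^18" using pw(2)[of 15 18] by (simp add: power_mult[symmetric])
      then have "K0 A * (\<sigma>^5)^3 \<le> K1 A * \<sigma>^18" using K0pos K0K1 \<sigma>1 by (intro mult_mono) auto
      then show ?thesis using Y0 r0 by (intro mult_left_mono divide_right_mono) auto
    qed
    also have "\<dots> = K1 A * \<sigma>^18 * Y / r^3" by simp
    finally show ?thesis .
  next
    case False
    then have sr: "r < 2 * s" by simp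
    have Hb: "\<bar>H\<bar> \<le> exp (3*A/2) * Y"
    proof (cases "s < r")
      case True
      have "exp (r * s) * (1 - s/r) powr (r^2 - A) \<le> exp (3*A/2) * exp (-(s^2)/2)"
        by (rule h_bound) (use A1 r0 rb s True in \<open>auto simp: A_def\<close>)
      then show ?thesis using True by (simp add: H_def Y_def A_def diff_diff_eq)
    next
      case False
      then show ?thesis using Y0 by (simp add: H_def)
    qed
    have "\<bar>H - Y * P\<bar> \<le> exp (3*A/2) * Y + Y * ((1 + 4*A + 2*A^2) * \<sigma>^6)"
    proof -
      have "\<bar>Y * P\<bar> = Y * \<bar>P\<bar>" using Y0 by (simp add: abs_mult)
      also have "\<dots> \<le> Y * ((1 + 4*A + 2*A^2) * \<sigma>^6)" using Pb Y0 by (intro mult_left_mono) auto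
      finally show ?thesis using Hb by linarith
    qed
    also have "\<dots> \<le> (exp (3*A/2) + 1 + 4*A + 2*A^2) * \<sigma>^6 * Y"
    proof -
      have "exp (3*A/2) \<le> exp (3*A/2) * \<sigma>^6" using \<sigma>1 by (simp add: one_le_power)
      then have "exp (3*A/2) * Y \<le> exp (3*A/2) * \<sigma>^6 * Y" using Y0 by (intro mult_right_mono) auto
      moreover have "(exp (3*A/2) + 1 + 4*A + 2*A^2) * \<sigma>^6 * Y = exp (3*A/2) * \<sigma>^6 * Y + Y * ((1 + 4*A + 2*A^2) * \<sigma>^6)"
        by (simp add: algebra_simps)
      ultimately show ?thesis by linarith
    qed
    also have "\<dots> \<le> (exp (3*A/2) + 1 + 4*A + 2*A^2) * \<sigma>^6 * Y * (8 * \<sigma>^3 / r^3)"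
    proof -
      have "r^3 \<le> (2 * s)^3" using sr r0 by (intro power_mono) auto
      also have "\<dots> = 8 * s^3" by simp
      also have "\<dots> \<le> 8 * \<sigma>^3" using pw(1)[of 3 3] by simp
      finally have "1 \<le> 8 * \<sigma>^3 / r^3" using r0 by simp
      moreover have "0 \<le> (exp (3*A/2) + 1 + 4*A + 2*A^2) * \<sigma>^6 * Y" using A1 \<sigma>1 Y0 by simp
      ultimately have "(exp (3*A/2) + 1 + 4*A + 2*A^2) * \<sigma>^6 * Y * 1 \<le> (exp (3*A/2) + 1 + 4*A + 2*A^2) * \<sigma>^6 * Y * (8 * \<sigma>^3 / r^3)"
        by (intro mult_left_mono)
      then show ?thesis by simp
    qed
    also have "\<dots> = 8 * (exp (3*A/2) + 1 + 4*A + 2*A^2) * \<sigma>^9 * Y / r^3"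
      by (simp add: power_add[symmetric] field_simps)
    also have "\<dots> \<le> K1 A * \<sigma>^18 * Y / r^3"
    proof -
      have "8 * (exp (3*A/2) + 1 + 4*A + 2*A^2) \<le> K1 A" unfolding K1_def using K0pos by simp
      moreover have "\<sigma>^9 \<le> \<sigma>^18" using pw(2)[of 9 18] by simp
      moreover have "0 \<le> 8 * (exp (3*A/2) + 1 + 4*A + 2*A^2)" using A1 by simp
      ultimately have "8 * (exp (3*A/2) + 1 + 4*A + 2*A^2) * \<sigma>^9 \<le> K1 A * \<sigma>^18"
        using \<sigma>1 by (intro mult_mono) auto
      then show ?thesis using Y0 r0 by (intro divide_right_mono mult_right_mono) auto
    qed
    finally show ?thesis .
  qed
  then show ?thesis unfolding Peq by (simp add: H_def Y_def \<sigma>_def A_def)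
qed



lemma gamma_int:
  fixes a :: real assumes a: "a > 0"
  shows "((\<lambda>t. t powr (a - 1) * exp (-t)) has_integral Gamma a) {0<..}"
proof -
  have "((\<lambda>t. t powr (a - 1) / exp t) has_integral Gamma a) {0..}"
    by (rule Gamma_integral_real) fact
  hence "((\<lambda>t. if t \<in> {0<..} then t powr (a - 1) / exp t else 0) has_integral Gamma a) {0..}"
    by (rule has_integral_spike [of "{0}", rotated 2]) auto
  also have "?this = ((\<lambda>t. t powr (a - 1) / exp t) has_integral Gamma a) {0<..}"
    by (subst has_integral_restrict) auto
  finally show ?thesis by (simp add: exp_minus divide_inverse)
qed

definition Cg :: "real \<Rightarrow> real" where "Cg M = fact 18 * exp (1 + (M+2)^2/2)"

lemma pow_le_exp: fixes x :: real assumes "x \<ge> 0" shows "x^n \<le> fact n * exp x"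
proof -
  have "x^n / fact n \<le> (\<Sum>k<Suc n. x^k / fact k)"
    by (rule member_le_sum) (use assms in auto)
  also have "\<dots> \<le> exp x" by (rule expsum) fact
  finally show ?thesis by (simp add: divide_le_eq mult.commute)
qed

lemma gauss_poly_bound:
  fixes s M :: real assumes s: "s \<ge> 0"
  shows "(1+s)^18 * exp (M * s - s^2/2) \<le> Cg M * exp (-s)"
proof -
  have "(1+s)^18 \<le> fact 18 * exp (1+s)" by (rule pow_le_exp) (use s in simp)
  then have "(1+s)^18 * exp (M * s - s^2/2) \<le> fact 18 * exp (1+s) * exp (M * s - s^2/2)"
    by (intro mult_right_mono) auto
  also have "\<dots> = fact 18 * exp (1 + (M+2) * s - s^2/2) * exp (-s)"
    by (simp add: mult.assoc flip: exp_add) (simp add: algebra_simps)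
  also have "\<dots> \<le> fact 18 * exp (1 + (M+2)^2/2) * exp (-s)"
  proof -
    have "0 \<le> ((M+2) - s)^2" by simp
    then have "(M+2) * s - s^2/2 \<le> (M+2)^2/2" by (simp add: power2_eq_square algebra_simps)
    then show ?thesis by (intro mult_right_mono mult_left_mono) auto
  qed
  finally show ?thesis by (simp add: Cg_def)
qed

definition G :: "real \<Rightarrow> complex \<Rightarrow> nat \<Rightarrow> real \<Rightarrow> complex" where
  "G a \<zeta> j s = exp (\<zeta> * of_real s - of_real (s^2/2)) * of_real (s powr (a + real j - 1))"

lemma G_bound:
  fixes a M s :: real and \<zeta> :: complex
  assumes a: "a > 0" and z: "norm \<zeta> \<le> M" and s: "s > 0" and j: "j \<le> 18"
  shows "norm (G a \<zeta> j s) \<le> Cg M * (s powr (a - 1) * exp (-s))"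
proof -
  have "norm (G a \<zeta> j s) = exp (Re \<zeta> * s - s^2/2) * s powr (a + real j - 1)"
    unfolding G_def using s by (simp add: norm_mult)
  also have "\<dots> \<le> exp (M * s - s^2/2) * (s powr (a - 1) * (1+s)^18)"
  proof (intro mult_mono)
    have "Re \<zeta> \<le> M" using z complex_Re_le_cmod order_trans by blast
    then have "Re \<zeta> * s \<le> M * s" using s by (intro mult_right_mono) auto
    then show "exp (Re \<zeta> * s - s^2/2) \<le> exp (M * s - s^2/2)" by simp
    have "s powr (a + real j - 1) = s powr (a - 1) * s^j"
      using s by (simp add: powr_add[symmetric] powr_realpow[symmetric] algebra_simps)
    also have "\<dots> \<le> s powr (a - 1) * (1+s)^18"
      using sig_pow2[of s j 18] s j by (intro mult_left_mono) auto
    finally show "s powr (a + real j - 1) \<le> s powr (a - 1) * (1+s)^18" .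
  qed auto
  also have "\<dots> = s powr (a - 1) * ((1+s)^18 * exp (M * s - s^2/2))" by (simp add: mult_ac)
  also have "\<dots> \<le> s powr (a - 1) * (Cg M * exp (-s))"
    by (intro mult_left_mono gauss_poly_bound) (use s in auto)
  finally show ?thesis by (simp add: mult_ac)
qed

lemma G_integrable:
  fixes a :: real and \<zeta> :: complex
  assumes a: "a > 0" and j: "j \<le> 18"
  shows "G a \<zeta> j integrable_on {0<..}"
proof (rule measurable_bounded_by_integrable_imp_integrable)
  show "G a \<zeta> j \<in> borel_measurable (lebesgue_on {0<..})"
    unfolding G_def
    by (intro continuous_imp_measurable_on_sets_lebesgue continuous_intros) auto
  show "(\<lambda>s. Cg (norm \<zeta>) * (s powr (a - 1) * exp (-s))) integrable_on {0<..}"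
    using has_integral_mult_right[OF gamma_int[OF a]] by blast
  show "norm (G a \<zeta> j s) \<le> Cg (norm \<zeta>) * (s powr (a - 1) * exp (-s))" if "s \<in> {0<..}" for s
    using G_bound[of a \<zeta> "norm \<zeta>" s j] that a j by auto
qed auto

lemma pcf_G:
  fixes a :: real and \<zeta> :: complex
  shows "pcf_D (- a - real j) (- \<zeta>) = exp (- (\<zeta>^2) / 4) / of_real (Gamma (a + real j)) * integral {0<..} (G a \<zeta> j)"
  unfolding pcf_D_def G_def by (simp add: algebra_simps)



lemma main_est:
  fixes a b M :: real and \<zeta> :: complex
  assumes a: "a > 0" and b: "b \<ge> a + 1" and z: "norm \<zeta> \<le> M"
  defines "P \<equiv> complex_of_real (Gamma b / Gamma (b - a) * b powr (- a / 2)) * exp (\<zeta>^2 / 4)"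
  shows "norm (hyp1F1 a b (complex_of_real b * (1 + complex_of_real (b powr (-1/2)) * \<zeta>))
                 - P * (pcf_D (- a) (- \<zeta>) + A1 a \<zeta> / complex_of_real (sqrt b)
                        + A2 a \<zeta> / complex_of_real b))
           \<le> (exp (M^2/4) * K1 (a+1) * Cg M) * b powr (-3/2) * norm P"
proof -
  define r where "r = sqrt b"
  have b0: "b > 0" using a b by simp
  have r0: "r > 0" using b0 by (simp add: r_def)
  have rr: "r^2 = b" using b0 by (simp add: r_def)
  have r1: "r \<ge> 1" using b a by (simp add: r_def real_le_rsqrt)
  have rb: "r^2 \<ge> a + 1" using rr b by simp
  have ab: "b > a" using b by simp
  define A where "A = a + 1"
  define Q where "Q = Gamma b / Gamma (b - a) * b powr (- a / 2)"
  have ga: "Gamma a > 0" using a by (simp add: Gamma_real_pos)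
  define z where "z = complex_of_real b * (1 + complex_of_real (b powr (-1/2)) * \<zeta>)"
  define W where "W = (\<lambda>s::real. if s < r then (s/r) powr (a-1) * (1-s/r) powr (b-a-1) else 0)"
  define F where "F = (\<lambda>s::real. if s < r then exp (\<zeta> * of_real s) *
        of_real (s powr (a-1) * (exp (r * s) * (1 - s/r) powr (r^2 - a - 1))) else 0)"
  define c2 where "c2 = A/2 + A^2/2"
  define c4 where "c4 = - 1/4 - A/3"
  define E where "E = (\<lambda>s. G a \<zeta> 0 s + (of_real A * G a \<zeta> 1 s - G a \<zeta> 3 s / 3) / of_real r
        + (of_real c2 * G a \<zeta> 2 s + of_real c4 * G a \<zeta> 4 s + G a \<zeta> 6 s / 18) / of_real b)"
  define I where "I = (\<lambda>j. integral {0<..} (G a \<zeta> j))"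
  have eul: "(\<lambda>s. exp (z * of_real (s/r)) * of_real (W s)) integrable_on {0<..}"
    "hyp1F1 a b z = of_real (Gamma b / (Gamma a * Gamma (b-a) * r)) *
           integral {0<..} (\<lambda>s. exp (z * of_real (s/r)) * of_real (W s))"
    using euler_rep[OF a ab r0, of z] unfolding W_def by simp_all
  have bm: "b powr (-1/2) = 1 / r"
  proof -
    have "b powr (-1/2) * b powr (1/2) = 1" using b0 by (simp add: powr_add[symmetric])
    moreover have "b powr (1/2) = r" using b0 by (simp add: r_def powr_half_sqrt)
    ultimately show ?thesis using r0 by (simp add: field_simps)
  qed
  have Feq: "F s = of_real (r powr (a-1)) * (exp (z * of_real (s/r)) * of_real (W s))" if "s > 0" for s
  proof (cases "s < r")
    case True
    have zr: "z * of_real (s/r) = of_real (r * s) + \<zeta> * of_real s"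
    proof -
      have bm2: "b powr (- (1/2)) = 1 / r" using bm by simp
      have z1: "z = of_real (r^2) * (1 + of_real (1/r) * \<zeta>)" unfolding z_def using bm bm2 rr by simp
      have rc: "complex_of_real r \<noteq> 0" using r0 by simp
      have "z = of_real (r^2) + of_real (r^2 * (1/r)) * \<zeta>"
        using z1 by (simp only: of_real_mult distrib_left mult_1_right mult.assoc)
      moreover have rr1: "r^2 * (1/r) = r" using r0 by (simp add: power2_eq_square)
      ultimately have zz: "z = of_real (r^2) + of_real r * \<zeta>" by (simp only: rr1)
      show ?thesis unfolding zz using rc by (simp add: field_simps power2_eq_square)
    qed
    have R: "r powr (a-1) * (exp (r * s) * ((s/r) powr (a-1) * (1-s/r) powr (b-a-1)))
           = s powr (a-1) * (exp (r * s) * (1 - s/r) powr (r^2 - a - 1))"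
      using r0 that by (simp add: powr_divide rr)
    have "of_real (r powr (a-1)) * (exp (z * of_real (s/r)) * of_real (W s))
        = exp (\<zeta> * of_real s) * of_real (r powr (a-1) * (exp (r * s) * ((s/r) powr (a-1) * (1-s/r) powr (b-a-1))))"
      unfolding zr exp_add W_def using True by (simp add: mult_ac flip: exp_of_real)
    also have "\<dots> = F s" unfolding R F_def using True by simp
    finally show ?thesis by simp
  next
    case False
    then show ?thesis by (simp add: F_def W_def)
  qed
  define J where "J = integral {0<..} (\<lambda>s. exp (z * of_real (s/r)) * of_real (W s))"
  have Fhas: "(F has_integral of_real (r powr (a-1)) * J) {0<..}"
  proof -
    have "((\<lambda>s. of_real (r powr (a-1)) * (exp (z * of_real (s/r)) * of_real (W s))) has_integral
            of_real (r powr (a-1)) * J) {0<..}"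
      unfolding J_def by (rule has_integral_mult_right[OF integrable_integral[OF eul(1)]])
    then show ?thesis
      by (rule has_integral_eq[rotated]) (use Feq in auto)
  qed
  have Fint: "F integrable_on {0<..}" using Fhas by blast
  have hypF: "hyp1F1 a b z = of_real (Q / Gamma a) * integral {0<..} F"
  proof -
    have rp: "r powr (a-1) > 0" using r0 by simp
    have "r * r powr (a-1) = r powr a" using powr_add[of r 1 "a-1"] r0 by simp
    also have "r powr a = b powr (a/2)"
      using b0 by (simp add: r_def powr_half_sqrt[symmetric] powr_powr)
    finally have e1: "r * r powr (a-1) = b powr (a/2)" .
    have e2: "b powr (- a / 2) * b powr (a/2) = 1" using b0 by (simp add: powr_add[symmetric])
    have "Gamma b / (Gamma a * Gamma (b-a) * r) = Q / Gamma a * r powr (a-1)"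
    proof -
      have bp: "b powr (a/2) > 0" using b0 by simp
      have e3: "b powr (- a / 2) = 1 / (r * r powr (a-1))"
        unfolding e1 using e2 bp by (simp add: field_simps)
      show ?thesis unfolding Q_def e3 using ga rp r0 by (simp add: field_simps)
    qed
    then have "hyp1F1 a b z = of_real (Q / Gamma a) * (of_real (r powr (a-1)) * J)"
      using eul(2) unfolding J_def by simp
    then show ?thesis using integral_unique[OF Fhas] by simp
  qed
  have Gint: "(G a \<zeta> j has_integral I j) {0<..}" if "j \<le> 18" for j
    using G_integrable[OF a that] unfolding I_def by (simp add: has_integral_integrable_integral)
  have Ehas: "(E has_integral (I 0 + (of_real A * I 1 - I 3 / 3) / of_real r
        + (of_real c2 * I 2 + of_real c4 * I 4 + I 6 / 18) / of_real b)) {0<..}"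
    unfolding E_def
    by (intro has_integral_add has_integral_diff has_integral_mult_right has_integral_divide Gint) auto
  have Prhs: "P * (pcf_D (- a) (- \<zeta>) + A1 a \<zeta> / complex_of_real (sqrt b) + A2 a \<zeta> / complex_of_real b)
     = of_real (Q / Gamma a) * (I 0 + (of_real A * I 1 - I 3 / 3) / of_real r
        + (of_real c2 * I 2 + of_real c4 * I 4 + I 6 / 18) / of_real b)"
  proof -
    define Z where "Z = exp (- (\<zeta>^2) / 4)"
    define \<gamma> where "\<gamma> = Gamma a"
    have Z0: "Z \<noteq> 0" by (simp add: Z_def)
    have Ze: "exp (\<zeta>^2/4) = 1 / Z" unfolding Z_def by (simp add: exp_minus field_simps)
    have g0: "\<gamma> > 0" using ga by (simp add: \<gamma>_def)
    have na: "a \<notin> \<int>\<^sub>\<le>\<^sub>0" using a by (auto elim!: nonpos_Ints_cases)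
    have n1: "a + 1 \<notin> \<int>\<^sub>\<le>\<^sub>0" using a by (auto elim!: nonpos_Ints_cases)
    have n2: "a + 2 \<notin> \<int>\<^sub>\<le>\<^sub>0" using a by (auto elim!: nonpos_Ints_cases)
    have g1: "Gamma (a+1) = a * \<gamma>" unfolding \<gamma>_def using Gamma_plus1[of a] na by simp
    have g2: "Gamma (a+2) = (a+1) * Gamma (a+1)" using Gamma_plus1[of "a+1"] n1 by (simp add: add.assoc)
    have g3: "Gamma (a+3) = (a+2) * Gamma (a+2)" using Gamma_plus1[of "a+2"] n2 by (simp add: add.assoc)
    have g4: "Gamma (a+4) > 0" using a by (intro Gamma_real_pos) simp
    have g6: "Gamma (a+6) > 0" using a by (intro Gamma_real_pos) simp
    have cx: "complex_of_real x * (Z / complex_of_real g * J) = Z * (complex_of_real y * J) / complex_of_real \<gamma>"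
      if "x / g = y / \<gamma>" for x g y J
    proof -
      have "complex_of_real x * (Z / complex_of_real g * J) = Z * J * of_real (x / g)"
        by (simp add: divide_inverse mult_ac)
      also have "\<dots> = Z * J * of_real (y / \<gamma>)" unfolding that ..
      also have "\<dots> = Z * (complex_of_real y * J) / complex_of_real \<gamma>" by (simp add: divide_inverse mult_ac)
      finally show ?thesis .
    qed
    have pj: "pcf_D (- a - real j) (- \<zeta>) = Z / of_real (Gamma (a + real j)) * I j" for j
      unfolding Z_def I_def by (rule pcf_G)
    have e0: "pcf_D (- a) (- \<zeta>) = Z * (complex_of_real 1 * I 0) / of_real \<gamma>"
      using pj[of 0] by (simp add: \<gamma>_def)
    have k1: "a * (a+1) / Gamma (a + 1) = A / \<gamma>" using g1 a g0 by (simp add: A_def field_simps)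
    have e1: "complex_of_real (a * (a + 1)) * pcf_D (- a - 1) (- \<zeta>) = Z * (complex_of_real A * I 1) / of_real \<gamma>"
      using pj[of 1] cx[OF k1] by simp
    have k3: "a * (a + 1) * (a + 2) / 3 / Gamma (a + 3) = (1/3) / \<gamma>"
    proof -
      have G: "Gamma (a+3) = (a+2)*(a+1)*a*\<gamma>" using g1 g2 g3 by simp
      have Gp: "Gamma (a+3) \<noteq> 0" using a by (simp add: Gamma_real_pos less_imp_neq[symmetric])
      have "a * (a + 1) * (a + 2) / 3 * \<gamma> = (1/3) * Gamma (a+3)" unfolding G by (simp add: algebra_simps)
      then show ?thesis using Gp g0 by (simp add: frac_eq_eq)
    qed
    have e3: "complex_of_real (a * (a + 1) * (a + 2) / 3) * pcf_D (- a - 3) (- \<zeta>) = Z * (complex_of_real (1/3) * I 3) / of_real \<gamma>"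
      using pj[of 3] cx[OF k3] by simp
    have k2: "a * (a + 1)^2 * (a + 2) / 2 / Gamma (a + 2) = c2 / \<gamma>"
    proof -
      have G: "Gamma (a+2) = (a+1)*a*\<gamma>" using g1 g2 by simp
      have Gp: "Gamma (a+2) \<noteq> 0" using a by (simp add: Gamma_real_pos less_imp_neq[symmetric])
      have "a * (a + 1)^2 * (a + 2) / 2 * \<gamma> = c2 * Gamma (a+2)" unfolding G c2_def A_def by (simp add: field_simps power2_eq_square)
      then show ?thesis using Gp g0 by (simp add: frac_eq_eq)
    qed
    have e2: "complex_of_real (a * (a + 1)^2 * (a + 2) / 2) * pcf_D (- a - 2) (- \<zeta>) = Z * (complex_of_real c2 * I 2) / of_real \<gamma>"
      using pj[of 2] cx[OF k2] by simp
    have k4: "Gamma (a + 4) / Gamma a * (1/4 + (a + 1) / 3) / Gamma (a + 4) = (- c4) / \<gamma>"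
      using g4 g0 by (simp add: c4_def A_def \<gamma>_def field_simps)
    have e4: "complex_of_real (Gamma (a + 4) / Gamma a * (1/4 + (a + 1) / 3)) * pcf_D (- a - 4) (- \<zeta>) = Z * (complex_of_real (- c4) * I 4) / of_real \<gamma>"
      using pj[of 4] cx[OF k4] by simp
    have k6: "Gamma (a + 6) / (18 * Gamma a) / Gamma (a + 6) = (1/18) / \<gamma>"
      using g6 g0 by (simp add: \<gamma>_def field_simps)
    have e6: "complex_of_real (Gamma (a + 6) / (18 * Gamma a)) * pcf_D (- a - 6) (- \<zeta>) = Z * (complex_of_real (1/18) * I 6) / of_real \<gamma>"
      using pj[of 6] cx[OF k6] by simp
    have sb: "sqrt b = r" by (simp add: r_def)
    have rc: "complex_of_real r \<noteq> 0" "complex_of_real b \<noteq> 0" "complex_of_real \<gamma> \<noteq> 0" using r0 b0 g0 by auto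
    show ?thesis
      unfolding P_def A1_def A2_def
      unfolding e0 e1 e2 e3 e4 e6 sb Ze Q_def[symmetric]
      unfolding \<gamma>_def[symmetric]
      using Z0 rc by (simp add: field_simps)
  qed
  have ptw: "norm (F s - E s) \<le> K1 A * Cg M / r^3 * (s powr (a - 1) * exp (-s))" if s: "s > 0" for s
  proof -
    define X where "X = exp (\<zeta> * of_real s)"
    define e where "e = exp (- (s^2) / 2)"
    define p where "p = s powr (a - 1)"
    have Gf: "G a \<zeta> j s = X * of_real (e * p * s^j)" for j
    proof -
      have "exp (\<zeta> * of_real s - of_real (s^2/2)) = exp (\<zeta> * of_real s + of_real (-(s^2)/2))"
        by simp
      also have "\<dots> = X * exp (of_real (-(s^2)/2))" unfolding X_def by (rule exp_add)
      also have "exp (of_real (-(s^2)/2)) = (of_real e :: complex)" unfolding e_def by (rule exp_of_real)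
      finally have 1: "exp (\<zeta> * of_real s - of_real (s^2/2)) = X * of_real e" .
      have "s powr (a + real j - 1) = s powr ((a - 1) + real j)" by (simp add: algebra_simps)
      also have "\<dots> = s powr (a - 1) * s powr (real j)" by (rule powr_add)
      also have "s powr (real j) = s^j" using s by (rule powr_realpow)
      finally have 2: "s powr (a + real j - 1) = p * s^j" unfolding p_def .
      show ?thesis unfolding G_def 1 2 by (simp add: mult_ac)
    qed
    define Pq where "Pq = 1 + (A * s - s^3/3) / r + (c2 * s^2 + c4 * s^4 + s^6/18) / b"
    have Ee: "E s = X * of_real (e * p * Pq)"
    proof -
      have rc: "complex_of_real r \<noteq> 0" "complex_of_real b \<noteq> 0" using r0 b0 by auto
      show ?thesis unfolding E_def Gf Pq_def using rc
        by (simp add: field_simps)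
    qed
    define H where "H = (if s < r then exp (r * s) * (1 - s/r) powr (r^2 - a - 1) else 0)"
    have Fe: "F s = X * of_real (p * H)" unfolding F_def H_def X_def p_def by simp
    have Pe: "Pq = 1 + ((a+1) * s - s^3/3)/r + ((a+1) * s^2/2 - s^4/4 + ((a+1) * s - s^3/3)^2/2)/r^2"
      unfolding Pq_def A_def c2_def c4_def rr[symmetric] using r0
      by (simp add: field_simps eval_nat_numeral)
    have Db: "\<bar>H - e * Pq\<bar> \<le> K1 A * (1+s)^18 * e / r^3"
    proof -
      note D0 = real_D_bound[OF a r1 rb s]
      have "\<bar>H - e * Pq\<bar> \<le> K1 (a+1) * (1+s)^18 * e / r^3"
        unfolding H_def e_def Pe using D0 .
      then show ?thesis by (simp add: A_def)
    qed
    have "F s - E s = X * of_real (p * (H - e * Pq))" unfolding Fe Ee by (simp add: algebra_simps)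
    then have N1: "norm (F s - E s) = norm X * norm (complex_of_real (p * (H - e * Pq)))"
      by (simp only: norm_mult)
    have N2: "norm (complex_of_real (p * (H - e * Pq))) = \<bar>p * (H - e * Pq)\<bar>" by (rule norm_of_real)
    have N3: "norm X = exp (Re \<zeta> * s)" unfolding X_def by simp
    have N4: "\<bar>p * (H - e * Pq)\<bar> = p * \<bar>H - e * Pq\<bar>" unfolding p_def by (simp add: abs_mult)
    have "norm (F s - E s) = exp (Re \<zeta> * s) * (p * \<bar>H - e * Pq\<bar>)" unfolding N1 N2 N3 N4 ..
    also have "\<dots> \<le> exp (M * s) * (p * (K1 A * (1+s)^18 * e / r^3))"
    proof (rule mult_mono)
      have "Re \<zeta> \<le> M" using z complex_Re_le_cmod order_trans by blast
      then show "exp (Re \<zeta> * s) \<le> exp (M * s)" using s by (simp add: mult_right_mono)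
      show "p * \<bar>H - e * Pq\<bar> \<le> p * (K1 A * (1+s)^18 * e / r^3)"
        using Db by (intro mult_left_mono) (auto simp: p_def)
    qed (auto simp: p_def)
    also have "\<dots> = K1 A / r^3 * p * ((1+s)^18 * exp (M * s - s^2/2))"
    proof -
      have ee: "exp (M * s - s^2/2) = exp (M * s) * e" unfolding e_def by (simp flip: exp_add)
      show ?thesis unfolding ee by (simp add: mult_ac)
    qed
    also have "\<dots> \<le> K1 A / r^3 * p * (Cg M * exp (-s))"
    proof (rule mult_left_mono)
      show "(1+s)^18 * exp (M * s - s^2/2) \<le> Cg M * exp (-s)" by (rule gauss_poly_bound) (use s in simp)
      have "K1 A \<ge> 0" unfolding K1_def K0_def A_def using a
        by (intro add_nonneg_nonneg mult_nonneg_nonneg) auto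
      then show "0 \<le> K1 A / r^3 * p" using r0 by (simp add: p_def)
    qed
    also have "\<dots> = K1 A * Cg M / r^3 * (s powr (a - 1) * exp (-s))" by (simp add: p_def)
    finally show ?thesis .
  qed
  have diffint: "((\<lambda>s. F s - E s) has_integral (integral {0<..} F - integral {0<..} E)) {0<..}"
    using Fint Ehas by (intro has_integral_diff) (auto simp: has_integral_integrable_integral)
  have nb: "norm (integral {0<..} F - integral {0<..} E) \<le> K1 A * Cg M / r^3 * Gamma a"
  proof -
    have g: "((\<lambda>s. K1 A * Cg M / r^3 * (s powr (a - 1) * exp (-s))) has_integral K1 A * Cg M / r^3 * Gamma a) {0<..}"
      by (rule has_integral_mult_right[OF gamma_int[OF a]])
    have "norm (integral {0<..} (\<lambda>s. F s - E s)) \<le> integral {0<..} (\<lambda>s. K1 A * Cg M / r^3 * (s powr (a - 1) * exp (-s)))"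
      by (rule integral_norm_bound_integral) (use diffint g ptw in \<open>auto simp: has_integral_integrable\<close>)
    then show ?thesis using integral_unique[OF diffint] integral_unique[OF g] by (simp add: integral_unique[OF gamma_int[OF a]])
  qed
  have hz: "hyp1F1 a b (complex_of_real b * (1 + complex_of_real (b powr (-1/2)) * \<zeta>)) = hyp1F1 a b z"
    by (simp add: z_def)
  have iE: "integral {0<..} E = I 0 + (of_real A * I 1 - I 3 / 3) / of_real r
        + (of_real c2 * I 2 + of_real c4 * I 4 + I 6 / 18) / of_real b"
    using Ehas by (rule integral_unique)
  have diff: "hyp1F1 a b (complex_of_real b * (1 + complex_of_real (b powr (-1/2)) * \<zeta>))
                 - P * (pcf_D (- a) (- \<zeta>) + A1 a \<zeta> / complex_of_real (sqrt b)
                        + A2 a \<zeta> / complex_of_real b)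
        = of_real (Q / Gamma a) * (integral {0<..} F - integral {0<..} E)"
    unfolding hz hypF Prhs iE by (simp add: right_diff_distrib)
  have Qp: "Q > 0" unfolding Q_def using b0 ab by (intro mult_pos_pos divide_pos_pos Gamma_real_pos) auto
  have K1p: "K1 A \<ge> 0" unfolding K1_def K0_def A_def using a
    by (intro add_nonneg_nonneg mult_nonneg_nonneg) auto
  have Cgp: "Cg M \<ge> 0" unfolding Cg_def by simp
  have "norm (of_real (Q / Gamma a) * (integral {0<..} F - integral {0<..} E))
        = Q / Gamma a * norm (integral {0<..} F - integral {0<..} E)"
  proof -
    have "norm (of_real (Q / Gamma a) * (integral {0<..} F - integral {0<..} E))
        = \<bar>Q / Gamma a\<bar> * norm (integral {0<..} F - integral {0<..} E)"
      by (simp only: norm_mult norm_of_real)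
    then show ?thesis using Qp ga by simp
  qed
  also have "\<dots> \<le> Q / Gamma a * (K1 A * Cg M / r^3 * Gamma a)"
    using nb Qp ga by (intro mult_left_mono) auto
  also have "\<dots> = K1 A * Cg M * (1 / r^3) * Q" using ga by (simp add: field_simps)
  also have "\<dots> \<le> K1 A * Cg M * b powr (-3/2) * (exp (M^2/4) * norm P)"
  proof -
    have r3: "1 / r^3 = b powr (-3/2)"
    proof -
      have "r^3 = r powr 3" using r0 by (simp add: powr_numeral)
      also have "\<dots> = b powr (3/2)" using b0 by (simp add: r_def powr_half_sqrt[symmetric] powr_powr)
      finally have "r^3 = b powr (3/2)" .
      moreover have "b powr (-3/2) * b powr (3/2) = 1" using b0 by (simp add: powr_add[symmetric])
      moreover have "b powr (3/2) > 0" using b0 by simp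
      ultimately show ?thesis using r0 by (simp add: field_simps)
    qed
    have nP: "norm P = Q * exp (Re (\<zeta>^2) / 4)" unfolding P_def Q_def[symmetric] using Qp
      by (simp add: norm_mult norm_exp_eq_Re)
    have "Re (\<zeta>^2) \<ge> - (M^2)"
    proof -
      have "\<bar>Im \<zeta>\<bar> \<le> M" using abs_Im_le_cmod[of \<zeta>] z by linarith
      then have "(Im \<zeta>)^2 \<le> M^2" by (metis abs_ge_zero power2_abs power_mono)
      moreover have "Re (\<zeta>^2) = (Re \<zeta>)^2 - (Im \<zeta>)^2" by (simp add: power2_eq_square)
      moreover have "(Re \<zeta>)^2 \<ge> 0" by simp
      ultimately show ?thesis by linarith
    qed
    then have "exp (- (M^2) / 4) \<le> exp (Re (\<zeta>^2) / 4)" by simp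
    then have "Q * exp (- (M^2) / 4) \<le> norm P" unfolding nP using Qp by (intro mult_left_mono) auto
    then have "exp (M^2/4) * (Q * exp (- (M^2) / 4)) \<le> exp (M^2/4) * norm P" by (intro mult_left_mono) auto
    moreover have "exp (M^2/4) * (Q * exp (- (M^2) / 4)) = Q"
    proof -
      have "exp (M^2/4) * exp (- (M^2) / 4) = exp (M^2/4 + - (M^2) / 4)" by (rule exp_add[symmetric])
      also have "\<dots> = 1" by simp
      finally show ?thesis by (metis mult.left_commute mult.right_neutral)
    qed
    ultimately have "Q \<le> exp (M^2/4) * norm P" by linarith
    then show ?thesis unfolding r3 using K1p Cgp b0 by (intro mult_left_mono) auto
  qed
  also have "\<dots> = (exp (M^2/4) * K1 (a+1) * Cg M) * b powr (-3/2) * norm P" by (simp add: A_def mult_ac)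
  finally show ?thesis unfolding diff .
qed


theorem theoremB6:
  fixes a :: real
  assumes "a > 0"
  shows "\<forall>K :: complex set. compact K \<longrightarrow>
    (\<exists>C B. \<forall>b::real. b \<ge> B \<longrightarrow> (\<forall>\<zeta>\<in>K.
       (let P = complex_of_real (Gamma b / Gamma (b - a) * b powr (- a / 2)) * exp (\<zeta>^2 / 4)
        in norm (hyp1F1 a b (complex_of_real b * (1 + complex_of_real (b powr (-1/2)) * \<zeta>))
                 - P * (pcf_D (- a) (- \<zeta>) + A1 a \<zeta> / complex_of_real (sqrt b)
                        + A2 a \<zeta> / complex_of_real b))
           \<le> C * b powr (-3/2) * norm P)))"
proof (intro allI impI)
  fix K :: "complex set" assume "compact K"
  then have "bounded K" by (rule compact_imp_bounded)
  then obtain M where M: "\<forall>\<zeta>\<in>K. norm \<zeta> \<le> M" by (auto simp: bounded_iff)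
  show "\<exists>C B. \<forall>b::real. b \<ge> B \<longrightarrow> (\<forall>\<zeta>\<in>K.
       (let P = complex_of_real (Gamma b / Gamma (b - a) * b powr (- a / 2)) * exp (\<zeta>^2 / 4)
        in norm (hyp1F1 a b (complex_of_real b * (1 + complex_of_real (b powr (-1/2)) * \<zeta>))
                 - P * (pcf_D (- a) (- \<zeta>) + A1 a \<zeta> / complex_of_real (sqrt b)
                        + A2 a \<zeta> / complex_of_real b))
           \<le> C * b powr (-3/2) * norm P))"
  proof (intro exI allI impI ballI)
    fix b :: real and \<zeta> assume b: "a + 1 \<le> b" and z: "\<zeta> \<in> K"
    show "let P = complex_of_real (Gamma b / Gamma (b - a) * b powr (- a / 2)) * exp (\<zeta>^2 / 4)
        in norm (hyp1F1 a b (complex_of_real b * (1 + complex_of_real (b powr (-1/2)) * \<zeta>))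
                 - P * (pcf_D (- a) (- \<zeta>) + A1 a \<zeta> / complex_of_real (sqrt b)
                        + A2 a \<zeta> / complex_of_real b))
           \<le> (exp (M^2/4) * K1 (a+1) * Cg M) * b powr (-3/2) * norm P"
      unfolding Let_def by (rule main_est[OF assms b]) (use M z in auto)
  qed
qed

end
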